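(* For $b,c\in(-1,\infty)$, with $f$ as defined in the context: (1) if $b=c$, then $f(b,c)=1$; (2) if $b>c$, then $\left(\frac{c+1}{b+1}\right)^2<f(b,c)<1$; (3) if $b<c$, then $1<f(b,c)<\left(\frac{c+1}{b+1}\right)^2$.
   Context: Let $u_n=(-1)^{s_2(n)}$, where $s_2(n)$ is the sum of the binary digits of the non-negative integer $n$ (Thue–Morse sequence with values $\pm1$). For $b,c\in\mathbb C\setminus\{-1,-2,-3,\dots\}$ define $f(b,c)=\prod_{n=1}^\infty\left(\frac{n+b}{n+c}\right)^{u_n}$ (limit of partial products; this converges for all such $b,c$). *)

theory Defs
  imports "HOL-Analysis.Analysis"
begin

fun s2 :: "nat \<Rightarrow> nat" where
  "s2 n = (if n = 0 then 0 else n mod 2 + s2 (n div 2))"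

declare s2.simps [simp del]

definition tm :: "nat \<Rightarrow> int" where
  "tm n = (-1) ^ s2 n"

definition tm_partial :: "complex \<Rightarrow> complex \<Rightarrow> nat \<Rightarrow> complex" where
  "tm_partial b c N = (\<Prod>n=1..N. ((of_nat n + b) / (of_nat n + c)) powi tm n)"

definition tm_f :: "complex \<Rightarrow> complex \<Rightarrow> complex" where
  "tm_f b c = lim (tm_partial b c)"

end

theory Submission
  imports Defs
begin

lemma s2_even: "s2 (2*k) = s2 k"
  by (cases "k = 0") (simp_all add: s2.simps[of "2*k"])

lemma s2_odd: "s2 (Suc (2*k)) = Suc (s2 k)"
  using s2.simps[of "Suc (2*k)"] by simp

lemma tm_odd: "tm (2*k+1) = - tm (2*k)"
  unfolding tm_def by (simp add: s2_even s2_odd)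

lemma tm_cases: "tm n = 1 \<or> tm n = -1"
  unfolding tm_def by (cases "even (s2 n)") auto

lemma tm_sum_even: "(\<Sum>k<2*m. tm k) = 0"
proof (induction m)
  case 0 then show ?case by simp
next
  case (Suc m)
  have "(\<Sum>k<2*Suc m. tm k) = (\<Sum>k<2*m. tm k) + tm (2*m) + tm (2*m+1)"
    by (simp add: algebra_simps)
  then show ?case using Suc tm_odd[of m] by simp
qed

lemma tm_sum_bound: "-1 \<le> (\<Sum>k<n. tm k) \<and> (\<Sum>k<n. tm k) \<le> 1"
proof (cases "even n")
  case True
  then obtain m where "n = 2*m" by blast
  then show ?thesis using tm_sum_even[of m] by simp
next
  case False
  then obtain m where n: "n = Suc (2*m)" by (metis oddE Suc_eq_plus1)
  have "(\<Sum>k<n. tm k) = tm (2*m)" using n tm_sum_even[of m] by simp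
  then show ?thesis using tm_cases[of "2*m"] by auto
qed

lemma tm_shift_bound: "-2 \<le> (\<Sum>k<m. real_of_int (tm (Suc k))) \<and> (\<Sum>k<m. real_of_int (tm (Suc k))) \<le> 0"
proof -
  have "(\<Sum>k<Suc m. tm k) = tm 0 + (\<Sum>k<m. tm (Suc k))"
    by (simp only: sum.lessThan_Suc_shift)
  moreover have "tm 0 = 1" by (simp add: tm_def s2.simps)
  ultimately have "(\<Sum>k<m. tm (Suc k)) = (\<Sum>k<Suc m. tm k) - 1" by simp
  moreover have "(\<Sum>k<m. real_of_int (tm (Suc k))) = real_of_int (\<Sum>k<m. tm (Suc k))" by simp
  ultimately show ?thesis using tm_sum_bound[of "Suc m"] by linarith
qed

lemma abel_bound:
  fixes a w :: "nat \<Rightarrow> real"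
  assumes dec: "\<And>n. a (Suc n) < a n" and lim: "a \<longlonglongrightarrow> 0"
    and Wb: "\<And>m. -2 \<le> (\<Sum>k<m. w k) \<and> (\<Sum>k<m. w k) \<le> 0"
    and w0: "w 0 = -1"
  shows "\<exists>T. (\<lambda>N. \<Sum>n<N. w n * a n) \<longlonglongrightarrow> T \<and> -2 * a 0 < T \<and> T < 0"
proof -
  define W where "W m = (\<Sum>k<m. w k)" for m
  define d where "d n = a n - a (Suc n)" for n
  have dpos: "d n > 0" for n using dec[of n] by (simp add: d_def)
  have decs: "decseq a" using dec by (simp add: decseq_SucI less_imp_le)
  have apos: "a n \<ge> 0" for n using decseq_ge[OF decs lim] by simp
  have parts: "(\<Sum>n<N. w n * a n) = W N * a N + (\<Sum>n<N. W (Suc n) * d n)" for N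
    by (induction N) (simp_all add: W_def d_def algebra_simps)
  have Wbd: "\<bar>W m\<bar> \<le> 2" for m using Wb[of m] unfolding W_def by linarith
  have t1: "(\<lambda>N. W N * a N) \<longlonglongrightarrow> 0"
  proof (rule Lim_null_comparison[where g="\<lambda>N. 2 * a N"])
    show "\<forall>\<^sub>F N in sequentially. norm (W N * a N) \<le> 2 * a N"
      using Wbd apos by (auto simp: abs_mult intro!: always_eventually mult_right_mono)
    show "(\<lambda>N. 2 * a N) \<longlonglongrightarrow> 0" using tendsto_mult_right_zero[OF lim] by simp
  qed
  have dsums: "d sums (a 0)"
  proof -
    have "(\<lambda>n. -(a (Suc n) - a n)) sums (-(0 - a 0))" by (rule sums_minus[OF telescope_sums[OF lim]])
    then show ?thesis by (simp add: d_def[abs_def])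
  qed
  have dsums1: "(\<lambda>n. d (Suc n)) sums (a 1)"
  proof -
    have L1: "(\<lambda>n. a (Suc n)) \<longlonglongrightarrow> 0" using lim by (rule LIMSEQ_Suc)
    have "(\<lambda>n. -(a (Suc (Suc n)) - a (Suc n))) sums (-(0 - a (Suc 0)))" by (rule sums_minus[OF telescope_sums[OF L1]])
    then show ?thesis by (simp add: d_def[abs_def])
  qed
  define e where "e n = W (Suc n) * d n" for n
  have esum: "summable e"
  proof (rule summable_comparison_test)
    show "\<exists>N. \<forall>n\<ge>N. norm (e n) \<le> 2 * d n"
    proof (intro exI allI impI)
      fix n :: nat
      have "\<bar>W (Suc n)\<bar> * d n \<le> 2 * d n" using Wbd[of "Suc n"] dpos[of n] by (intro mult_right_mono) auto
      then show "norm (e n) \<le> 2 * d n" using dpos[of n] by (simp add: e_def abs_mult)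
    qed
    show "summable (\<lambda>n. 2 * d n)" using dsums summable_mult sums_summable by blast
  qed
  define T where "T = suminf e"
  have eT: "e sums T" using esum T_def summable_sums by blast
  have eT1: "(\<lambda>n. e (Suc n)) sums (T - e 0)" using eT sums_Suc_iff[of e "T - e 0"] by simp
  have e0: "e 0 = - d 0" by (simp add: e_def W_def w0)
  have up: "T - e 0 \<le> 0"
  proof -
    have le: "e (Suc n) \<le> 0" for n
    proof -
      have "W (Suc (Suc n)) \<le> 0" using Wb unfolding W_def by blast
      then show ?thesis using dpos[of "Suc n"] unfolding e_def by (intro mult_nonpos_nonneg) auto
    qed
    have "(\<lambda>n. 0::real) sums 0" by simp
    from sums_le[OF le eT1 this] show ?thesis .
  qed
  have lo: "-2 * a 1 \<le> T - e 0"
  proof -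
    have s1: "(\<lambda>n. -2 * d (Suc n)) sums (-2 * a 1)" using dsums1 sums_mult by blast
    have le: "-2 * d (Suc n) \<le> e (Suc n)" for n
    proof -
      have "-2 \<le> W (Suc (Suc n))" using Wb unfolding W_def by blast
      then show ?thesis
        using dpos[of "Suc n"] unfolding e_def by (intro mult_right_mono) (auto simp: less_imp_le)
    qed
    from sums_le[OF le s1 eT1] show ?thesis .
  qed
  have lim2: "(\<lambda>N. \<Sum>n<N. w n * a n) \<longlonglongrightarrow> 0 + T"
    unfolding parts using tendsto_add[OF t1 eT[unfolded sums_def]] by (simp add: e_def)
  show ?thesis
    apply (rule exI[of _ T])
    using lim2 up lo e0 dpos[of 0] dec[of 0] unfolding d_def by auto
qed

lemma ratio_mono:
  fixes m m' b c :: real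
  assumes "c < b" "m + c > 0" "m' = m + 1"
  shows "(m'+b)/(m'+c) < (m+b)/(m+c)"
proof -
  have p: "m + 1 + c > 0" using assms by simp
  have k: "(m+1+b)*(m+c) < (m+b)*(m+1+c)" using assms by (simp add: algebra_simps)
  have "(m+1+b)/(m+1+c) = ((m+1+b)*(m+c)) / ((m+1+c)*(m+c))" using assms by simp
  also have "\<dots> < ((m+b)*(m+1+c)) / ((m+1+c)*(m+c))"
    using k p assms by (intro divide_strict_right_mono) auto
  also have "\<dots> = (m+b)/(m+c)" using p by simp
  finally show ?thesis using assms(3) by simp
qed

lemma ratio_mono2:
  fixes m m' b c :: real
  assumes "b < c" "m + b > 0" "m' = m + 1"
  shows "(m+b)/(m+c) < (m'+b)/(m'+c)"
proof -
  have p: "m + c > 0" "m' + b > 0" "m' + c > 0" using assms by auto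
  have "(m'+c)/(m'+b) < (m+c)/(m+b)" using ratio_mono[OF assms(1) assms(2) assms(3)] .
  then have "inverse ((m+c)/(m+b)) < inverse ((m'+c)/(m'+b))"
    using p assms by (intro less_imp_inverse_less) auto
  then show ?thesis by simp
qed

lemma expa0:
  fixes b c :: real
  assumes "b > -1" "c > -1"
  shows "exp (-2 * ln ((b + 1) / (c + 1))) = ((c + 1) / (b + 1))^2"
proof -
  have e: "exp (ln ((b + 1) / (c + 1))) = (b + 1) / (c + 1)" using assms by (intro exp_ln) auto
  have "exp (-2 * ln ((b + 1) / (c + 1))) = inverse (exp (ln ((b + 1) / (c + 1))) * exp (ln ((b + 1) / (c + 1))))"
    by (simp add: exp_add[symmetric] exp_minus)
  also have "\<dots> = ((c + 1) / (b + 1))^2" unfolding e by (simp add: power2_eq_square)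
  finally show ?thesis .
qed

lemma partial_eq:
  fixes b c :: real
  assumes "b > -1" "c > -1"
  shows "tm_partial (complex_of_real b) (complex_of_real c) N
     = complex_of_real (exp (\<Sum>n<N. real_of_int (tm (Suc n)) * ln ((real (Suc n) + b) / (real (Suc n) + c))))"
proof (induction N)
  case 0 then show ?case by (simp add: tm_partial_def)
next
  case (Suc N)
  define r where "r = (real (Suc N) + b) / (real (Suc N) + c)"
  have rpos: "r > 0" using assms unfolding r_def by (auto intro!: divide_pos_pos)
  have z: "(of_nat (Suc N) + complex_of_real b) / (of_nat (Suc N) + complex_of_real c) = complex_of_real r"
    by (simp add: r_def)
  have fac: "complex_of_real r powi tm (Suc N) = complex_of_real (exp (real_of_int (tm (Suc N)) * ln r))"
    using tm_cases[of "Suc N"] rpos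
    by (auto simp: exp_minus power_int_minus of_real_inverse)
  have "tm_partial (complex_of_real b) (complex_of_real c) (Suc N)
      = tm_partial (complex_of_real b) (complex_of_real c) N
        * ((of_nat (Suc N) + complex_of_real b) / (of_nat (Suc N) + complex_of_real c)) powi tm (Suc N)"
    unfolding tm_partial_def by simp
  also have "\<dots> = complex_of_real (exp (\<Sum>n<Suc N. real_of_int (tm (Suc n)) * ln ((real (Suc n) + b) / (real (Suc n) + c))))"
    unfolding Suc z fac by (simp add: exp_add r_def)
  finally show ?case .
qed

lemma main_lim:
  fixes b c :: real
  assumes "b > -1" "c > -1"
    and "(\<lambda>N. \<Sum>n<N. real_of_int (tm (Suc n)) * ln ((real (Suc n) + b) / (real (Suc n) + c))) \<longlonglongrightarrow> T"
  shows "tm_f (complex_of_real b) (complex_of_real c) = complex_of_real (exp T)"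
proof -
  have "(\<lambda>N. tm_partial (complex_of_real b) (complex_of_real c) N) \<longlonglongrightarrow> complex_of_real (exp T)"
    unfolding partial_eq[OF assms(1,2)] by (intro tendsto_of_real tendsto_exp assms(3))
  then show ?thesis unfolding tm_f_def by (rule limI)
qed

theorem lemma5:
  fixes b c :: real
  assumes "b > -1" and "c > -1"
  shows "(b = c \<longrightarrow> tm_f (complex_of_real b) (complex_of_real c) = 1)
       \<and> (b > c \<longrightarrow> (\<exists>x::real. tm_f (complex_of_real b) (complex_of_real c) = complex_of_real x
              \<and> ((c + 1) / (b + 1))^2 < x \<and> x < 1))
       \<and> (b < c \<longrightarrow> (\<exists>x::real. tm_f (complex_of_real b) (complex_of_real c) = complex_of_real x
              \<and> 1 < x \<and> x < ((c + 1) / (b + 1))^2))"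
proof -
  define a where "a n = ln ((real (Suc n) + b) / (real (Suc n) + c))" for n
  define w where "w n = real_of_int (tm (Suc n))" for n
  have w0: "w 0 = -1" by (simp add: w_def tm_def s2.simps)
  have Wb: "-2 \<le> (\<Sum>k<m. w k) \<and> (\<Sum>k<m. w k) \<le> 0" for m
    unfolding w_def by (rule tm_shift_bound)
  have a0: "a 0 = ln ((b + 1) / (c + 1))" by (simp add: a_def add.commute)
  have ea0: "exp (-2 * a 0) = ((c + 1) / (b + 1))^2" unfolding a0 using expa0[OF assms] .
  have alim: "a \<longlonglongrightarrow> 0"
  proof -
    have "(\<lambda>n. (real (Suc n) + b) / (real (Suc n) + c)) \<longlonglongrightarrow> 1"
    proof -
      have L: "(\<lambda>n. (1 + b * inverse (real (Suc n))) / (1 + c * inverse (real (Suc n)))) \<longlonglongrightarrow> (1 + b * 0) / (1 + c * 0)"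
        by (intro tendsto_intros LIMSEQ_inverse_real_of_nat) simp
      have E: "(1 + b * inverse (real (Suc n))) / (1 + c * inverse (real (Suc n))) = (real (Suc n) + b) / (real (Suc n) + c)" for n
      proof -
        define m where "m = real (Suc n)"
        have m: "m > 0" "m + c > 0" using assms by (auto simp: m_def)
        have 1: "1 + b * inverse m = (m + b) / m" using m by (simp add: field_simps)
        have 2: "1 + c * inverse m = (m + c) / m" using m by (simp add: field_simps)
        have "((m + b) / m) / ((m + c) / m) = (m + b) / (m + c)" using m by simp
        then show ?thesis using 1 2 by (simp add: m_def)
      qed
      show ?thesis using L unfolding E by simp
    qed
    from tendsto_ln[OF this] show ?thesis by (simp add: a_def[abs_def])
  qed
  have pos: "(real (Suc n) + b) / (real (Suc n) + c) > 0" for n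
    using assms by (intro divide_pos_pos) auto
  have mpos: "real (Suc n) + b > 0" "real (Suc n) + c > 0" for n using assms by auto
  have succ: "real (Suc (Suc n)) = real (Suc n) + 1" for n by simp
  show ?thesis
  proof (intro conjI impI)
    assume "b = c"
    have z: "ln ((real (Suc n) + b) / (real (Suc n) + c)) = 0" for n
    proof -
      have "real (Suc n) + c \<noteq> 0" using mpos(2)[of n] by linarith
      then show ?thesis using \<open>b = c\<close> by simp
    qed
    have "(\<lambda>N. \<Sum>n<N. real_of_int (tm (Suc n)) * ln ((real (Suc n) + b) / (real (Suc n) + c))) \<longlonglongrightarrow> 0"
      unfolding z by simp
    from main_lim[OF assms this] show "tm_f (complex_of_real b) (complex_of_real c) = 1" by simp
  next
    assume bc: "b > c"
    have dec: "a (Suc n) < a n" for n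
      unfolding a_def by (rule ln_strict_mono[OF ratio_mono[OF bc mpos(2) succ] pos])
    obtain T where T: "(\<lambda>N. \<Sum>n<N. w n * a n) \<longlonglongrightarrow> T" "-2 * a 0 < T" "T < 0"
      using abel_bound[OF dec alim Wb w0] by blast
    have "tm_f (complex_of_real b) (complex_of_real c) = complex_of_real (exp T)"
      using main_lim[OF assms] T(1) unfolding w_def a_def by simp
    moreover have "exp (-2 * a 0) < exp T" using T(2) by simp
    then have "((c + 1) / (b + 1))^2 < exp T" unfolding ea0 .
    moreover have "exp T < 1" using T(3) by simp
    ultimately show "\<exists>x. tm_f (complex_of_real b) (complex_of_real c) = complex_of_real x \<and> ((c + 1) / (b + 1))\<^sup>2 < x \<and> x < 1"
      by blast
  next
    assume bc: "b < c"
    have dec: "- a (Suc n) < - a n" for n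
    proof -
      have "a n < a (Suc n)"
        unfolding a_def by (rule ln_strict_mono[OF ratio_mono2[OF bc mpos(1) succ] pos])
      then show ?thesis by simp
    qed
    have alim': "(\<lambda>n. - a n) \<longlonglongrightarrow> 0" using tendsto_minus[OF alim] by simp
    obtain T where T: "(\<lambda>N. \<Sum>n<N. w n * - a n) \<longlonglongrightarrow> T" "-2 * - a 0 < T" "T < 0"
      using abel_bound[of "\<lambda>n. - a n", OF dec alim' Wb w0] by blast
    have "(\<lambda>N. \<Sum>n<N. w n * a n) \<longlonglongrightarrow> - T"
      using tendsto_minus[OF T(1)] by (simp add: sum_negf)
    then have "tm_f (complex_of_real b) (complex_of_real c) = complex_of_real (exp (- T))"
      using main_lim[OF assms] unfolding w_def a_def by simp
    moreover have "exp (-T) < exp (-2 * a 0)" using T(2) by simp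
    then have "exp (-T) < ((c + 1) / (b + 1))^2" unfolding ea0 .
    moreover have "1 < exp (-T)" using T(3) by simp
    ultimately show "\<exists>x. tm_f (complex_of_real b) (complex_of_real c) = complex_of_real x \<and> 1 < x \<and> x < ((c + 1) / (b + 1))\<^sup>2"
      by blast
  qed
qed

end
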